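(* Let $T>0$ and let $M,N\ge 1$ be integers. Let $a\in L^2(\mathbb R)$ be supported in $[-T_a/2,T_a/2]$ for some $T_a>0$ (no further restriction on $T_a$), and suppose $a$ is square-root Nyquist for the interval $T/M$ with energy $1/N$, i.e. $$\int_{\mathbb R} a(t)\,a^*\!\left(t-k\tfrac{T}{M}\right)dt=\tfrac1N\,\delta(k)\quad\text{for all }k\in\mathbb Z.$$ Define the DDOP $u(t)=\sum_{\dot n=0}^{N-1}a(t-\dot nT)$, let $D=\lceil T_a/T\rceil$, and define its cyclically extended version $$u_c(t)=\sum_{n=-D}^{N-1+D}a(t-nT).$$ Then $$\mathcal A_{u_c,u}\!\left(m\tfrac{T}{M},\,n\tfrac{1}{NT}\right)=\delta(m)\,\delta(n)$$ for all integers $m,n$ with $|m|\le M-1$ and $|n|\le N-1$.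
   Context: For $g,\gamma\in L^2(\mathbb R)$, the (cross-)ambiguity function is $\mathcal A_{g,\gamma}(\tau,\nu)=\int_{\mathbb R} g(t)\,\gamma^*(t-\tau)\,e^{-j2\pi\nu(t-\tau)}\,dt$. Here $\delta(\cdot)$ denotes the Kronecker delta on integers, $j=\sqrt{-1}$, and $\lceil\cdot\rceil$ is the ceiling function. *)

theory Defs
  imports "HOL-Analysis.Analysis"
begin

definition ambiguity :: "(real \<Rightarrow> complex) \<Rightarrow> (real \<Rightarrow> complex) \<Rightarrow> real \<Rightarrow> real \<Rightarrow> complex" where
  "ambiguity g \<gamma> \<tau> \<nu> =
     (LINT t|lborel. g t * cnj (\<gamma> (t - \<tau>)) * exp (- \<i> * complex_of_real (2 * pi * \<nu> * (t - \<tau>))))"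

definition kdelta :: "int \<Rightarrow> complex" where
  "kdelta k = (if k = 0 then 1 else 0)"

definition square_integrable :: "(real \<Rightarrow> complex) \<Rightarrow> bool" where
  "square_integrable f \<longleftrightarrow> f \<in> borel_measurable lborel \<and> integrable lborel (\<lambda>t. (cmod (f t))\<^sup>2)"

definition ddop :: "(real \<Rightarrow> complex) \<Rightarrow> real \<Rightarrow> nat \<Rightarrow> real \<Rightarrow> complex" where
  "ddop a T N t = (\<Sum>n<N. a (t - real n * T))"

definition ddop_cyc :: "(real \<Rightarrow> complex) \<Rightarrow> real \<Rightarrow> real \<Rightarrow> nat \<Rightarrow> real \<Rightarrow> complex" where
  "ddop_cyc a Ta T N t =
     (let D = \<lceil>Ta / T\<rceil> in (\<Sum>n\<in>{-D .. int N - 1 + D}. a (t - real_of_int n * T)))"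

end

theory Submission
  imports Defs
begin


lemma sq_shift:
  assumes "square_integrable a"
  shows "integrable lborel (\<lambda>t. (cmod (a (t - p)))\<^sup>2)"
proof -
  have "integrable lborel (\<lambda>t. (cmod (a t))\<^sup>2)" using assms by (simp add: square_integrable_def)
  from lborel_integrable_real_affine[OF this, of 1 "-p"] show ?thesis by simp
qed

lemma ab: "(x::real) * y \<le> (x\<^sup>2 + y\<^sup>2) / 2"
proof -
  have "0 \<le> (x - y)\<^sup>2" by simp
  then have "2 * (x * y) \<le> x\<^sup>2 + y\<^sup>2" unfolding power2_diff by (simp add: mult.assoc)
  then show ?thesis by simp
qed

lemma int_prod:
  assumes sq: "square_integrable a"
  shows "integrable lborel (\<lambda>t. a (t - p) * cnj (a (t - q)) * exp (- \<i> * complex_of_real (r * (t - z))))"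
proof (rule Bochner_Integration.integrable_bound)
  have am: "a \<in> borel_measurable borel" using sq by (simp add: square_integrable_def)
  show "integrable lborel (\<lambda>t. ((cmod (a (t - p)))\<^sup>2 + (cmod (a (t - q)))\<^sup>2) / 2)"
    using sq_shift[OF sq, of p] sq_shift[OF sq, of q] by simp
  show "(\<lambda>t. a (t - p) * cnj (a (t - q)) * exp (- \<i> * complex_of_real (r * (t - z)))) \<in> borel_measurable lborel"
  proof -
    have c: "(\<lambda>x. cnj (a (x - q))) \<in> borel_measurable borel"
    proof (rule borel_measurable_continuous_on[where f=cnj])
      show "continuous_on UNIV cnj" using continuous_on_cnj[OF continuous_on_id] by (simp add: id_def)
      show "(\<lambda>x. a (x - q)) \<in> borel_measurable borel" using am by measurable
    qed
    have e: "(\<lambda>x. exp (- \<i> * complex_of_real (r * (x - z)))) \<in> borel_measurable borel"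
      by (rule borel_measurable_continuous_onI) (intro continuous_intros)
    have m1: "(\<lambda>x. a (x - p)) \<in> borel_measurable borel" using am by measurable
    show ?thesis unfolding measurable_lborel2 by (rule borel_measurable_times[OF borel_measurable_times[OF m1 c] e])
  qed
  show "AE t in lborel. norm (a (t - p) * cnj (a (t - q)) * exp (- \<i> * complex_of_real (r * (t - z))))
     \<le> norm (((cmod (a (t - p)))\<^sup>2 + (cmod (a (t - q)))\<^sup>2) / 2)"
  proof (intro AE_I2)
    fix t
    have e: "cmod (exp (- \<i> * complex_of_real (r * (t - z)))) = 1"
      by (simp add: norm_exp_eq_Re)
    have "cmod (a (t - p)) * cmod (a (t - q)) \<le> ((cmod (a (t - p)))\<^sup>2 + (cmod (a (t - q)))\<^sup>2) / 2"
      by (rule ab)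
    then show "norm (a (t - p) * cnj (a (t - q)) * exp (- \<i> * complex_of_real (r * (t - z))))
     \<le> norm (((cmod (a (t - p)))\<^sup>2 + (cmod (a (t - q)))\<^sup>2) / 2)"
      by (simp add: norm_mult e)
  qed
qed

lemma expand_prod:
  fixes f :: "'x \<Rightarrow> complex" and g :: "'y \<Rightarrow> complex"
  shows "(\<Sum>l\<in>L. f l) * cnj (\<Sum>j\<in>J. g j) * e = (\<Sum>j\<in>J. \<Sum>l\<in>L. f l * cnj (g j) * e)"
  unfolding cnj_sum unfolding sum_product unfolding sum_distrib_right by (rule sum.swap)

lemma shift_sum:
  fixes F :: "int \<Rightarrow> 'b::comm_monoid_add"
  assumes z: "\<And>l. \<bar>l\<bar> > D \<Longrightarrow> F l = 0" and lo: "lo \<le> j - D" and hi: "j + D \<le> hi"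
  shows "(\<Sum>l\<in>{lo..hi}. F (l - j)) = (\<Sum>l\<in>{-D..D}. F l)"
proof -
  have img: "(\<lambda>n. n + j) ` {lo - j..hi - j} = {lo..hi}" by simp
  have "(\<Sum>l\<in>{lo..hi}. F (l - j)) = (\<Sum>l\<in>(\<lambda>n. n + j) ` {lo - j..hi - j}. F (l - j))"
    by (simp only: img)
  also have "\<dots> = (\<Sum>l\<in>{lo - j..hi - j}. F l)"
    by (subst sum.reindex) (auto simp: inj_on_def)
  also have "\<dots> = (\<Sum>l\<in>{-D..D}. F l)"
    by (rule sum.mono_neutral_right) (use lo hi z in auto)
  finally show ?thesis .
qed

lemma geo_zero:
  fixes n :: int and N :: nat
  assumes "n \<noteq> 0" "\<bar>n\<bar> \<le> int N - 1"
  shows "(\<Sum>j<N. exp (- \<i> * complex_of_real (2 * pi * real_of_int n * real j / real N))) = 0"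
proof -
  define z where "z = - \<i> * complex_of_real (2 * pi * real_of_int n / real N)"
  have N0: "real N \<noteq> 0" using assms by auto
  have eq: "\<And>j. exp (- \<i> * complex_of_real (2 * pi * real_of_int n * real j / real N)) = exp z ^ j"
  proof -
    fix j
    have "- \<i> * complex_of_real (2 * pi * real_of_int n * real j / real N) = of_nat j * z"
      unfolding z_def by (simp add: field_simps)
    then show "exp (- \<i> * complex_of_real (2 * pi * real_of_int n * real j / real N)) = exp z ^ j"
      by (simp add: exp_of_nat_mult)
  qed
  have wN: "exp z ^ N = 1"
  proof -
    have "exp z ^ N = exp (of_nat N * z)" by (simp add: exp_of_nat_mult)
    also have "of_nat N * z = \<i> * (of_int (- n) * (of_real pi * 2))"
      unfolding z_def using N0 by (simp add: field_simps)
    also have "exp \<dots> = 1" by (rule exp_2pi_1_int)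
    finally show ?thesis .
  qed
  have w1: "exp z \<noteq> 1"
  proof
    assume "exp z = 1"
    then obtain k :: int where k: "Im z = of_int (2 * k) * pi" by (auto simp: exp_eq_1)
    have "Im z = - (2 * pi * real_of_int n / real N)" unfolding z_def by simp
    with k have "- (2 * pi * real_of_int n / real N) = 2 * real_of_int k * pi" by simp
    then have "pi * (- real_of_int n) = pi * (real_of_int k * real N)" using N0 by (simp add: field_simps)
    then have "- real_of_int n = real_of_int k * real N" using pi_neq_zero mult_left_cancel by blast
    then have "real_of_int (- n) = real_of_int (k * int N)" by simp
    then have nk: "- n = k * int N" by (simp only: of_int_eq_iff)
    show False
    proof (cases "k = 0")
      case True then show False using nk assms by simp
    next
      case False
      then have "1 \<le> \<bar>k\<bar>" by linarith
      then have "1 * int N \<le> \<bar>k\<bar> * int N" by (intro mult_right_mono) auto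
      then have "\<bar>k * int N\<bar> \<ge> int N" by (simp add: abs_mult)
      with nk assms show False by simp
    qed
  qed
  show ?thesis unfolding eq using wN w1 by (simp add: sum_gp_strict)
qed

theorem lemma2:
  fixes a :: "real \<Rightarrow> complex" and T Ta :: real and M N :: nat
  assumes "T > 0" and "M \<ge> 1" and "N \<ge> 1" and "Ta > 0"
    and "square_integrable a"
    and "\<And>t. \<bar>t\<bar> > Ta / 2 \<Longrightarrow> a t = 0"
    and "\<And>k::int. (LINT t|lborel. a t * cnj (a (t - real_of_int k * (T / real M))))
                    = kdelta k / of_nat N"
  shows "\<forall>m n :: int. \<bar>m\<bar> \<le> int M - 1 \<and> \<bar>n\<bar> \<le> int N - 1 \<longrightarrow>
           ambiguity (ddop_cyc a Ta T N) (ddop a T N)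
             (real_of_int m * (T / real M)) (real_of_int n * (1 / (real N * T)))
           = kdelta m * kdelta n"
proof (intro allI impI)
  fix m n :: int
  assume mn: "\<bar>m\<bar> \<le> int M - 1 \<and> \<bar>n\<bar> \<le> int N - 1"
  define \<tau> where "\<tau> = real_of_int m * (T / real M)"
  define \<nu> where "\<nu> = real_of_int n * (1 / (real N * T))"
  define D where "D = \<lceil>Ta / T\<rceil>"
  define E where "E = (\<lambda>x::real. exp (- \<i> * complex_of_real (2 * pi * \<nu> * x)))"
  define W where "W = (\<lambda>j::nat. exp (- \<i> * complex_of_real (2 * pi * \<nu> * (real j * T))))"
  define F where "F = (\<lambda>l::int. LINT s|lborel. a s * cnj (a (s - (\<tau> - real_of_int l * T))) * E (s - (\<tau> - real_of_int l * T)))"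
  define S where "S = (\<Sum>l\<in>{-D..D}. F l)"
  have T0: "T > 0" and M0: "real M > 0" using assms by auto
  have D0: "D \<ge> 0" unfolding D_def using divide_pos_pos[OF assms(4) assms(1)] by (simp; linarith)
  have DT: "Ta \<le> real_of_int D * T"
  proof -
    have "Ta / T * T \<le> real_of_int D * T" unfolding D_def
      using T0 by (intro mult_right_mono le_of_int_ceiling) auto
    then show ?thesis using T0 by simp
  qed
  have taubound: "\<bar>\<tau>\<bar> < T"
  proof -
    have "\<bar>\<tau>\<bar> = real_of_int \<bar>m\<bar> * T / real M" unfolding \<tau>_def using T0 M0 by (simp add: abs_mult)
    also have "\<dots> \<le> (real M - 1) * T / real M"
      using mn T0 M0 by (intro divide_right_mono mult_right_mono) (auto simp: of_nat_diff)
    also have "\<dots> < T" using T0 M0 by (simp add: field_simps)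
    finally show ?thesis .
  qed
  have int: "\<And>p q. integrable lborel (\<lambda>t. a (t - p) * cnj (a (t - q)) * E (t - \<tau>))"
    unfolding E_def by (rule int_prod[OF assms(5)])
  have amb: "ambiguity (ddop_cyc a Ta T N) (ddop a T N) \<tau> \<nu>
      = (\<Sum>j<N. \<Sum>l\<in>{-D..int N - 1 + D}. LINT t|lborel. a (t - real_of_int l * T) * cnj (a (t - (\<tau> + real j * T))) * E (t - \<tau>))"
  proof -
    have "ambiguity (ddop_cyc a Ta T N) (ddop a T N) \<tau> \<nu>
       = (LINT t|lborel. ddop_cyc a Ta T N t * cnj (ddop a T N (t - \<tau>)) * E (t - \<tau>))"
      by (simp add: ambiguity_def E_def)
    also have "\<dots> = (LINT t|lborel. (\<Sum>j<N. \<Sum>l\<in>{-D..int N - 1 + D}. a (t - real_of_int l * T) * cnj (a (t - (\<tau> + real j * T))) * E (t - \<tau>)))"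
    proof -
      have pt: "ddop_cyc a Ta T N t * cnj (ddop a T N (t - \<tau>)) * E (t - \<tau>) = (\<Sum>j<N. \<Sum>l\<in>{-D..int N - 1 + D}. a (t - real_of_int l * T) * cnj (a (t - (\<tau> + real j * T))) * E (t - \<tau>))" for t
      proof -
        have c: "ddop_cyc a Ta T N t = (\<Sum>l\<in>{-D..int N - 1 + D}. a (t - real_of_int l * T))"
          unfolding ddop_cyc_def D_def Let_def by simp
        have d: "ddop a T N (t - \<tau>) = (\<Sum>j<N. a (t - (\<tau> + real j * T)))"
          unfolding ddop_def by (simp add: diff_diff_eq)
        show ?thesis unfolding c d by (rule expand_prod)
      qed
      show ?thesis by (simp only: pt)
    qed
    also have "\<dots> = (\<Sum>j<N. \<Sum>l\<in>{-D..int N - 1 + D}. LINT t|lborel. a (t - real_of_int l * T) * cnj (a (t - (\<tau> + real j * T))) * E (t - \<tau>))"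
      by (simp add: integral_sum int)
    finally show ?thesis .
  qed
  have trm: "(LINT t|lborel. a (t - real_of_int l * T) * cnj (a (t - (\<tau> + real j * T))) * E (t - \<tau>))
      = F (l - int j) * W j" for j l
  proof -
    let ?f = "\<lambda>t. a (t - real_of_int l * T) * cnj (a (t - (\<tau> + real j * T))) * E (t - \<tau>)"
    have "(LINT t|lborel. ?f t) = (LINT s|lborel. ?f (real_of_int l * T + 1 * s))"
      using lborel_integral_real_affine[of 1 ?f "real_of_int l * T"] by simp
    also have "(\<lambda>s. ?f (real_of_int l * T + 1 * s)) = (\<lambda>s. (a s * cnj (a (s - (\<tau> - real_of_int (l - int j) * T))) * E (s - (\<tau> - real_of_int (l - int j) * T))) * W j)"
    proof
      fix s
      have e1: "real_of_int l * T + 1 * s - real_of_int l * T = s" by simp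
      have e2: "real_of_int l * T + 1 * s - (\<tau> + real j * T) = s - (\<tau> - real_of_int (l - int j) * T)"
        by (simp add: algebra_simps)
      have e3: "E (real_of_int l * T + 1 * s - \<tau>) = E (s - (\<tau> - real_of_int (l - int j) * T)) * W j"
      proof -
        have "- \<i> * complex_of_real (2 * pi * \<nu> * (real_of_int l * T + 1 * s - \<tau>))
           = - \<i> * complex_of_real (2 * pi * \<nu> * (s - (\<tau> - real_of_int (l - int j) * T)))
             + - \<i> * complex_of_real (2 * pi * \<nu> * (real j * T))"
          by (simp add: algebra_simps)
        then show ?thesis unfolding E_def W_def by (simp add: exp_add[symmetric])
      qed
      show "?f (real_of_int l * T + 1 * s) = (a s * cnj (a (s - (\<tau> - real_of_int (l - int j) * T))) * E (s - (\<tau> - real_of_int (l - int j) * T))) * W j"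
        by (simp only: e1 e2 e3 mult.assoc)
    qed
    also have "(LINT s|lborel. (a s * cnj (a (s - (\<tau> - real_of_int (l - int j) * T))) * E (s - (\<tau> - real_of_int (l - int j) * T))) * W j) = F (l - int j) * W j"
      unfolding F_def by simp
    finally show ?thesis .
  qed
  have Fz: "F l = 0" if l: "\<bar>l\<bar> > D" for l
  proof -
    have "a s * cnj (a (s - (\<tau> - real_of_int l * T))) * E (s - (\<tau> - real_of_int l * T)) = 0" for s
    proof (cases "\<bar>s\<bar> > Ta / 2")
      case True then show ?thesis using assms(6) by simp
    next
      case False
      have "real_of_int D + 1 \<le> real_of_int \<bar>l\<bar>" using l by linarith
      then have "(real_of_int D + 1) * T \<le> \<bar>real_of_int l\<bar> * T" using T0 by (intro mult_right_mono) auto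
      then have "\<bar>real_of_int l * T\<bar> \<ge> real_of_int D * T + T" using T0 by (simp add: abs_mult algebra_simps)
      then have "\<bar>s - (\<tau> - real_of_int l * T)\<bar> > Ta / 2" using False taubound DT by linarith
      then show ?thesis using assms(6) by simp
    qed
    then have "(\<lambda>s. a s * cnj (a (s - (\<tau> - real_of_int l * T))) * E (s - (\<tau> - real_of_int l * T))) = (\<lambda>s. 0)"
      by (rule ext)
    then show ?thesis unfolding F_def by (simp only:) simp
  qed
  have resum: "(\<Sum>l\<in>{-D..int N - 1 + D}. F (l - int j)) = S" if "j < N" for j
    unfolding S_def by (rule shift_sum[OF Fz]) (use that in auto)
  have tot: "ambiguity (ddop_cyc a Ta T N) (ddop a T N) \<tau> \<nu> = S * (\<Sum>j<N. W j)"
  proof -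
    have "ambiguity (ddop_cyc a Ta T N) (ddop a T N) \<tau> \<nu> = (\<Sum>j<N. (\<Sum>l\<in>{-D..int N - 1 + D}. F (l - int j)) * W j)"
      unfolding amb trm by (simp add: sum_distrib_right)
    also have "\<dots> = (\<Sum>j<N. S * W j)" by (rule sum.cong) (auto simp: resum)
    finally show ?thesis by (simp add: sum_distrib_left)
  qed
  show "ambiguity (ddop_cyc a Ta T N) (ddop a T N)
             (real_of_int m * (T / real M)) (real_of_int n * (1 / (real N * T)))
           = kdelta m * kdelta n"
  proof (cases "n = 0")
    case False
    have "(\<Sum>j<N. W j) = (\<Sum>j<N. exp (- \<i> * complex_of_real (2 * pi * real_of_int n * real j / real N)))"
      unfolding W_def \<nu>_def using T0 by (intro sum.cong refl) (simp add: field_simps)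
    also have "\<dots> = 0" by (rule geo_zero) (use False mn in auto)
    finally show ?thesis using tot False unfolding \<tau>_def \<nu>_def by (simp add: kdelta_def)
  next
    case True
    then have nu0: "\<nu> = 0" unfolding \<nu>_def by simp
    have W1: "(\<Sum>j<N. W j) = of_nat N" unfolding W_def nu0 by simp
    have Fl: "F l = kdelta (m - l * int M) / of_nat N" for l
    proof -
      have "\<tau> - real_of_int l * T = real_of_int (m - l * int M) * (T / real M)"
        unfolding \<tau>_def using M0 by (simp add: field_simps)
      then have "F l = (LINT s|lborel. a s * cnj (a (s - real_of_int (m - l * int M) * (T / real M))))"
        unfolding F_def E_def nu0 by (simp only: mult_zero_right mult_zero_left of_real_0 exp_zero mult_1_right)
      then show ?thesis using assms(7)[of "m - l * int M"] by (simp only:)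
    qed
    have "S = (\<Sum>l\<in>{-D..D}. if l = 0 then kdelta m / of_nat N else 0)"
      unfolding S_def
    proof (rule sum.cong[OF refl])
      fix l assume "l \<in> {-D..D}"
      show "F l = (if l = 0 then kdelta m / of_nat N else 0)"
      proof (cases "l = 0")
        case True then show ?thesis by (simp add: Fl)
      next
        case False
        have "m - l * int M \<noteq> 0"
        proof
          assume "m - l * int M = 0"
          then have "\<bar>m\<bar> = \<bar>l\<bar> * int M" by (simp add: abs_mult)
          moreover have "\<bar>l\<bar> * int M \<ge> int M"
          proof -
            have "1 \<le> \<bar>l\<bar>" using False by linarith
            then have "1 * int M \<le> \<bar>l\<bar> * int M" by (intro mult_right_mono) auto
            then show ?thesis by simp
          qed
          ultimately show False using mn by simp
        qed
        then show ?thesis using False by (simp add: Fl kdelta_def)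
      qed
    qed
    also have "\<dots> = kdelta m / of_nat N" using D0 by simp
    finally have "S = kdelta m / of_nat N" .
    then show ?thesis using tot W1 True assms(3) unfolding \<tau>_def \<nu>_def[symmetric]
      by (simp add: kdelta_def)
  qed
qed

end
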